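(* Let $S$ be a left cancellative semigroup. If $S$ has infinitely many $\mathcal{R}$-classes and at least one of them is infinite, then $S$ has infinitely many infinite $\mathcal{R}$-classes.
   Context: $S$ is left cancellative if $ax=ay$ implies $x=y$ for all $a,x,y\in S$. $\mathcal{R}$ is Green's relation on $S$: $x\,\mathcal{R}\,y$ iff $xS^1=yS^1$. *)

theory Defs
  imports Main
begin

definition left_cancellative :: "('a::semigroup_mult) itself \<Rightarrow> bool" where
  "left_cancellative _ \<longleftrightarrow> (\<forall>a x y :: 'a. a * x = a * y \<longrightarrow> x = y)"

definition right_ideal1 :: "'a::semigroup_mult \<Rightarrow> 'a set" where
  "right_ideal1 x = insert x {x * s | s. True}"

definition greenR :: "('a::semigroup_mult \<times> 'a) set" where
  "greenR = {(x, y). right_ideal1 x = right_ideal1 y}"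

definition R_classes :: "('a::semigroup_mult) set set" where
  "R_classes = UNIV // greenR"

end

theory Submission
  imports Defs
begin

lemma ri_mult: "right_ideal1 (a*x) = (\<lambda>z. a*z) ` right_ideal1 (x::'a::semigroup_mult)"
  unfolding right_ideal1_def by (auto simp: mult.assoc)

lemma ri_sub: "(a::'a::semigroup_mult) \<in> right_ideal1 b \<Longrightarrow> right_ideal1 a \<subseteq> right_ideal1 b"
  unfolding right_ideal1_def by (auto simp: mult.assoc)

lemma ri_self: "a \<in> right_ideal1 a"
  unfolding right_ideal1_def by auto

lemma cls_iff: "C \<in> (R_classes :: 'a::semigroup_mult set set) \<longleftrightarrow>
   (\<exists>a. C = {b. right_ideal1 b = right_ideal1 a})"
  unfolding R_classes_def quotient_def greenR_def by auto

theorem mainTheorem9: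
  assumes "left_cancellative TYPE('a::semigroup_mult)"
    and "infinite (R_classes :: 'a set set)"
    and "\<exists>C \<in> (R_classes :: 'a set set). infinite C"
  shows "infinite {C \<in> (R_classes :: 'a set set). infinite C}"
proof
  define cls where "cls = (\<lambda>a::'a. {b. right_ideal1 b = right_ideal1 a})"
  have canc: "\<And>a x y::'a. a*x = a*y \<Longrightarrow> x = y" using assms(1) unfolding left_cancellative_def by blast
  have inj: "\<And>a::'a. inj ((*) a)" by (meson canc injI)
  have L1: "\<And>a x y::'a. right_ideal1 x = right_ideal1 y \<Longrightarrow> right_ideal1 (a*x) = right_ideal1 (a*y)"
    by (simp add: ri_mult)
  have L2: "\<And>a x y::'a. right_ideal1 (a*x) = right_ideal1 (a*y) \<Longrightarrow> right_ideal1 x = right_ideal1 y"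
    by (simp add: ri_mult inj inj_image_eq_iff)
  define I where "I = {C \<in> (R_classes :: 'a set set). infinite C}"
  assume fin: "finite {C \<in> (R_classes :: 'a set set). infinite C}"
  hence finI: "finite I" unfolding I_def .
  obtain C0 where C0: "C0 \<in> (R_classes :: 'a set set)" "infinite C0" using assms(3) by blast
  then obtain x where x: "C0 = cls x" using cls_iff cls_def by blast
  have C0I: "C0 \<in> I" using C0 I_def by blast
  have clsR: "\<And>a. cls a \<in> (R_classes :: 'a set set)" using cls_iff cls_def by blast
  have key: "\<exists>u. x = y * u" for y :: 'a
  proof -
    define g where "g = (\<lambda>C::'a set. cls (y * (SOME c. c \<in> C)))"
    have memI: "C \<in> I \<Longrightarrow> (SOME c. c \<in> C) \<in> C \<and> C = cls (SOME c. c \<in> C)" for C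
    proof -
      assume "C \<in> I"
      then obtain a where a: "C = cls a" "infinite C" using I_def cls_iff cls_def by blast
      then have "C \<noteq> {}" by auto
      then obtain c0 where "c0 \<in> C" by blast
      then have s: "(SOME c. c \<in> C) \<in> C" by (rule someI)
      then have "C = cls (SOME c. c \<in> C)" using a unfolding cls_def by auto
      with s show ?thesis by blast
    qed
    have gI: "g ` I \<subseteq> I"
    proof
      fix D assume "D \<in> g ` I"
      then obtain C where C: "C \<in> I" "D = g C" by blast
      let ?s = "SOME c. c \<in> C"
      have sub: "(*) y ` C \<subseteq> D"
      proof
        fix z assume "z \<in> (*) y ` C"
        then obtain c where c: "c \<in> C" "z = y*c" by blast
        have "right_ideal1 c = right_ideal1 ?s" using memI[OF C(1)] c unfolding cls_def by blast
        then have "right_ideal1 (y*c) = right_ideal1 (y*?s)" by (rule L1)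
        then show "z \<in> D" using C(2) c(2) unfolding g_def cls_def by simp
      qed
      have "infinite C" using C I_def by blast
      then have "infinite ((*) y ` C)" using inj by (meson finite_imageD inj_on_subset subset_UNIV)
      then have "infinite D" using sub finite_subset by blast
      then show "D \<in> I" unfolding I_def using C clsR g_def by auto
    qed
    have ginj: "inj_on g I"
    proof
      fix C D assume C: "C \<in> I" and D: "D \<in> I" and eq: "g C = g D"
      have "y * (SOME c. c \<in> C) \<in> g C" unfolding g_def cls_def by auto
      then have "right_ideal1 (y * (SOME c. c \<in> C)) = right_ideal1 (y * (SOME c. c \<in> D))"
        using eq unfolding g_def cls_def by auto
      then have "right_ideal1 (SOME c. c \<in> C) = right_ideal1 (SOME c. c \<in> D)" using L2 by blast
      then show "C = D" using memI[OF C] memI[OF D] unfolding cls_def by auto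
    qed
    have "g ` I = I" using endo_inj_surj[OF finI gI ginj] .
    then obtain C where C: "C \<in> I" "C0 = g C" using C0I by blast
    have "x \<in> C0" using x ri_self unfolding cls_def by auto
    then have "right_ideal1 x = right_ideal1 (y * (SOME c. c \<in> C))" using C unfolding g_def cls_def by auto
    then have "x \<in> right_ideal1 (y * (SOME c. c \<in> C))" using ri_self by metis
    then show ?thesis unfolding right_ideal1_def by (auto simp: mult.assoc)
  qed
  obtain u where u: "x = x * x * u" using key[of "x*x"] by blast
  define e where "e = x * u"
  have xe: "x * e = x" using u unfolding e_def by (simp add: mult.assoc)
  have "x * (e * e) = x * e" using xe by (metis mult.assoc)
  then have ee: "e * e = e" using canc by blast
  have el: "e * z = z" for z
  proof -
    have "e * (e * z) = e * z" using ee by (metis mult.assoc)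
    then show ?thesis using canc by blast
  qed
  have allx: "right_ideal1 z = right_ideal1 x" for z
  proof
    have "z = x * (u * z)" using el[of z] unfolding e_def by (simp add: mult.assoc)
    then have "z \<in> right_ideal1 x" unfolding right_ideal1_def by auto
    then show "right_ideal1 z \<subseteq> right_ideal1 x" by (rule ri_sub)
    obtain w where "x = z * w" using key by blast
    then have "x \<in> right_ideal1 z" unfolding right_ideal1_def by auto
    then show "right_ideal1 x \<subseteq> right_ideal1 z" by (rule ri_sub)
  qed
  have "(R_classes :: 'a set set) \<subseteq> {cls x}"
  proof
    fix C assume "C \<in> (R_classes :: 'a set set)"
    then obtain a where "C = cls a" using cls_iff cls_def by blast
    then show "C \<in> {cls x}" using allx unfolding cls_def by auto
  qed
  then show False using assms(2) finite_subset by blast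
qed

end
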